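(* Let $c>0$, $0<q_1<q_2<1$, $a,b\in\mathbb{R}$, and let $\Delta(s)=s^{q_1+q_2}+as^{q_2}+bs^{q_1}+c$, with principal values of the complex power functions. 1. If $a+1>0$, $a+b>0$ and $b+c>0$, then all roots of $\Delta(s)$ lie in the open left half-plane, regardless of $q_1$ and $q_2$. 2. If $a+b+c+1\le 0$, then $\Delta(s)$ has at least one positive real root, regardless of $q_1$ and $q_2$.
   Context: Principal value: $s^{q}=|s|^q e^{iq\arg(s)}$ with $\arg(s)\in(-\pi,\pi]$. *)

theory Defs
  imports "HOL-Analysis.Analysis"
begin

text \<open>Characteristic function with principal-value complex powers
  (Isabelle's complex powr uses the principal branch Ln, Im in (-pi, pi];
  and 0 powr q = 0).\<close>
definition Delta :: "real \<Rightarrow> real \<Rightarrow> real \<Rightarrow> real \<Rightarrow> real \<Rightarrow> complex \<Rightarrow> complex" where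
  "Delta q1 q2 a b c s =
     s powr (complex_of_real (q1 + q2)) + complex_of_real a * s powr (complex_of_real q2)
     + complex_of_real b * s powr (complex_of_real q1) + complex_of_real c"

end

theory Submission
  imports Defs
begin

lemma sin_concave_scale:
  fixes \<mu> y :: real
  assumes "0 \<le> \<mu>" "\<mu> \<le> 1" "0 \<le> y" "y \<le> pi"
  shows "\<mu> * sin y \<le> sin (\<mu> * y)"
proof -
  let ?h = "\<lambda>t. sin (\<mu> * t) - \<mu> * sin t"
  have "?h 0 \<le> ?h y"
  proof (rule DERIV_nonneg_imp_nondecreasing[OF assms(3)])
    fix x assume x: "0 \<le> x" "x \<le> y"
    have "DERIV ?h x :> (cos (\<mu> * x) * \<mu> - \<mu> * cos x)"
      by (auto intro!: derivative_eq_intros)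
    moreover have "cos x \<le> cos (\<mu> * x)"
    proof (rule cos_monotone_0_pi_le)
      show "0 \<le> \<mu> * x" using x assms by simp
      show "\<mu> * x \<le> x" using x assms by (simp add: mult_left_le_one_le)
      show "x \<le> pi" using x assms by simp
    qed
    ultimately show "\<exists>d. DERIV ?h x :> d \<and> d \<ge> 0"
      using assms by (intro exI[of _ "cos (\<mu> * x) * \<mu> - \<mu> * cos x"])
        (auto simp: algebra_simps mult_left_mono)
  qed
  then show ?thesis by simp
qed

lemma powr_convex:
  fixes r t x y :: real
  assumes "r > 0" "0 \<le> t" "t \<le> 1"
  shows "r powr ((1 - t) * x + t * y) \<le> (1 - t) * r powr x + t * r powr y"
proof -
  have "exp ((1 - t) *\<^sub>R (x * ln r) + t *\<^sub>R (y * ln r)) \<le> (1 - t) * exp (x * ln r) + t * exp (y * ln r)"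
    using convex_onD[OF exp_convex, of t "x * ln r" "y * ln r"] assms by simp
  then show ?thesis using assms by (simp add: powr_def algebra_simps)
qed

lemma core:
  fixes r \<theta> q1 q2 a b c :: real
  assumes r: "r > 0" and th: "0 < \<theta>" "\<theta> \<le> pi/2"
    and q: "0 < q1" "q1 < q2" "q2 < 1"
    and abc: "c > 0" "a + 1 > 0" "a + b > 0" "b + c > 0"
    and E1: "r powr (q1+q2) * sin ((q1+q2)*\<theta>) + a * r powr q2 * sin (q2*\<theta>) + b * r powr q1 * sin (q1*\<theta>) = 0"
    and E2: "c * sin ((q1+q2)*\<theta>) + a * r powr q2 * sin (q1*\<theta>) + b * r powr q1 * sin (q2*\<theta>) = 0"
  shows False
proof -
  define S1 where "S1 = sin (q1*\<theta>)"
  define S2 where "S2 = sin (q2*\<theta>)"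
  define S12 where "S12 = sin ((q1+q2)*\<theta>)"
  define x where "x = r powr q1"
  define y where "y = r powr q2"
  define z where "z = r powr (q1+q2)"
  have xp: "x > 0" "y > 0" "z > 0" using r by (auto simp: x_def y_def z_def)
  have q2th: "q2 * \<theta> < pi/2"
  proof -
    have "q2 * \<theta> < 1 * \<theta>" using q th by (intro mult_strict_right_mono) auto
    then show ?thesis using th by linarith
  qed
  have q1th: "q1 * \<theta> < q2 * \<theta>" using q th by simp
  have q1p: "0 < q1 * \<theta>" using q th by simp
  have S1pos: "S1 > 0" unfolding S1_def using q1p q1th q2th pi_gt_zero by (intro sin_gt_zero) linarith+
  have S12: "S2 > S1" unfolding S1_def S2_def using q1p q1th q2th pi_gt_zero
    by (intro sin_monotone_2pi) linarith+
  have T1: "q1 * S2 \<le> q2 * S1"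
  proof -
    have "(q1/q2) * sin (q2*\<theta>) \<le> sin ((q1/q2) * (q2*\<theta>))"
      using q th q2th by (intro sin_concave_scale) auto
    then have "(q1/q2) * S2 \<le> S1" using q by (simp add: S1_def S2_def)
    then show ?thesis using q by (simp add: field_simps)
  qed
  have T2: "(q2 - q1) * S2 \<le> q2 * S12"
  proof -
    define \<phi> where "\<phi> = q2 * \<theta>"
    define \<mu> where "\<mu> = (pi - (q1+q2)*\<theta>) / (pi - \<phi>)"
    have phi: "0 < \<phi>" "\<phi> < pi/2" using q th q2th by (auto simp: \<phi>_def)
    have "(q1+q2)*\<theta> < pi" using q1th q2th by (simp add: distrib_right)
    then have mu0: "0 \<le> \<mu>" using phi by (simp add: \<mu>_def)
    have mu1: "\<mu> \<le> 1" using phi q th by (simp add: \<mu>_def \<phi>_def field_simps)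
    have "\<mu> * sin (pi - \<phi>) \<le> sin (\<mu> * (pi - \<phi>))"
      using mu0 mu1 phi by (intro sin_concave_scale) auto
    moreover have "\<mu> * (pi - \<phi>) = pi - (q1+q2)*\<theta>" using phi by (simp add: \<mu>_def)
    ultimately have A: "\<mu> * S2 \<le> S12" by (simp add: S2_def S12_def \<phi>_def)
    have "q2 * \<mu> \<ge> q2 - q1"
    proof -
      have "q1 * pi \<ge> q1 * (2 * \<phi>)" using phi q
        by (intro mult_left_mono) auto
      then have "q2 * (pi - (q1+q2)*\<theta>) \<ge> (q2 - q1) * (pi - \<phi>)"
        by (simp add: \<phi>_def algebra_simps)
      then show ?thesis using phi by (simp add: \<mu>_def field_simps)
    qed
    then have "(q2 - q1) * S2 \<le> q2 * \<mu> * S2" using S12 S1pos by (intro mult_right_mono) auto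
    also have "\<dots> \<le> q2 * S12" using A q by (simp add: mult.assoc)
    finally show ?thesis .
  qed
  have W1: "q2 * y \<le> (q2 - q1) * z + q1 * x"
  proof -
    have "r powr ((1 - q1/q2) * (q1+q2) + (q1/q2) * q1) \<le> (1 - q1/q2) * z + (q1/q2) * x"
      using powr_convex[OF r, of "q1/q2" "q1+q2" q1] q by (simp add: z_def x_def)
    moreover have "(1 - q1/q2) * (q1+q2) + (q1/q2) * q1 = q2" using q by (simp add: field_simps)
    ultimately have "y \<le> (1 - q1/q2) * z + (q1/q2) * x" by (simp add: y_def)
    then show ?thesis using q by (simp add: field_simps)
  qed
  have W2: "q2 * x \<le> q1 * y + (q2 - q1)"
  proof -
    have "r powr ((1 - q1/q2) * 0 + (q1/q2) * q2) \<le> (1 - q1/q2) * r powr 0 + (q1/q2) * y"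
      using powr_convex[OF r, of "q1/q2" 0 q2] q by (simp add: y_def)
    then have "x \<le> (1 - q1/q2) + (q1/q2) * y" using q r by (simp add: x_def)
    then have "q2 * x \<le> q2 * ((1 - q1/q2) + (q1/q2) * y)" using q by (intro mult_left_mono) auto
    also have "\<dots> = q1 * y + (q2 - q1)" using q by (simp add: field_simps)
    finally show ?thesis .
  qed
  have K1: "y * S2 \<le> z * S12 + x * S1"
  proof -
    have "q2 * (y * S2) \<le> ((q2 - q1) * z + q1 * x) * S2"
      using W1 S12 S1pos by (simp add: mult_right_mono mult.assoc[symmetric])
    also have "\<dots> = z * ((q2 - q1) * S2) + x * (q1 * S2)" by (simp add: algebra_simps)
    also have "\<dots> \<le> z * (q2 * S12) + x * (q2 * S1)"
      using T1 T2 xp by (intro add_mono mult_left_mono) auto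
    finally have "q2 * (y * S2) \<le> q2 * (z * S12 + x * S1)" by (simp add: algebra_simps)
    then show ?thesis using q by simp
  qed
  have K2: "x * S2 \<le> S12 + y * S1"
  proof -
    have "q2 * (x * S2) \<le> (q1 * y + (q2 - q1)) * S2"
      using W2 S12 S1pos by (simp add: mult_right_mono mult.assoc[symmetric])
    also have "\<dots> = y * (q1 * S2) + ((q2 - q1) * S2)" by (simp add: algebra_simps)
    also have "\<dots> \<le> y * (q2 * S1) + q2 * S12"
      using T1 T2 xp by (intro add_mono mult_left_mono) auto
    finally have "q2 * (x * S2) \<le> q2 * (S12 + y * S1)" by (simp add: algebra_simps)
    then show ?thesis using q by simp
  qed
  show False
  proof (cases "r \<ge> 1")
    case True
    have "x \<le> y" unfolding x_def y_def using True q by (intro powr_mono) auto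
    then have QR: "x * S1 \<le> y * S2" using S12 S1pos xp by (intro mult_mono) auto
    have "z * S12 + a * y * S2 + b * x * S1
        = (z * S12 - y * S2 + x * S1) + (a + 1) * (y * S2 - x * S1) + (a + b) * (x * S1)"
      by (simp add: algebra_simps)
    also have "\<dots> > 0"
    proof -
      have "(a + 1) * (y * S2 - x * S1) \<ge> 0" using abc QR by simp
      moreover have "(a + b) * (x * S1) > 0" using abc xp S1pos by simp
      ultimately show ?thesis using K1 by linarith
    qed
    finally show False using E1 by (simp add: x_def y_def z_def S1_def S2_def S12_def)
  next
    case False
    have "y \<le> x" unfolding x_def y_def using False q r by (intro powr_mono') auto
    then have QR: "y * S1 \<le> x * S2" using S12 S1pos xp by (intro mult_mono) auto
    have "c * S12 + a * y * S1 + b * x * S2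
        = c * (S12 - x * S2 + y * S1) + (b + c) * (x * S2 - y * S1) + (a + b) * (y * S1)"
      by (simp add: algebra_simps)
    also have "\<dots> > 0"
    proof -
      have "(b + c) * (x * S2 - y * S1) \<ge> 0" using abc QR by simp
      moreover have "(a + b) * (y * S1) > 0" using abc xp S1pos by simp
      moreover have "c * (S12 - x * S2 + y * S1) \<ge> 0" using abc K2 by simp
      ultimately show ?thesis by linarith
    qed
    finally show False using E2 by (simp add: x_def y_def z_def S1_def S2_def S12_def)
  qed
qed

lemma cpowr_polar:
  fixes s :: complex and q :: real
  assumes "s \<noteq> 0"
  shows "s powr (complex_of_real q) = complex_of_real (cmod s powr q) * cis (q * Arg s)"
proof -
  have "s powr (complex_of_real q) = exp (complex_of_real q * Ln s)"
    using assms by (simp add: powr_def)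
  also have "\<dots> = exp (complex_of_real (q * ln (cmod s)) + \<i> * complex_of_real (q * Arg s))"
    using assms by (simp add: Ln_Arg algebra_simps)
  also have "\<dots> = exp (complex_of_real (q * ln (cmod s))) * exp (\<i> * complex_of_real (q * Arg s))"
    by (rule exp_add)
  also have "\<dots> = complex_of_real (exp (q * ln (cmod s))) * cis (q * Arg s)"
    by (simp only: exp_of_real cis_conv_exp)
  also have "\<dots> = complex_of_real (cmod s powr q) * cis (q * Arg s)"
    using assms by (simp add: powr_def)
  finally show ?thesis .
qed

lemma real_case_pos:
  fixes r q1 q2 a b c :: real
  assumes r: "r > 0" and q: "0 < q1" "q1 < q2"
    and abc: "c > 0" "a + 1 > 0" "a + b > 0" "b + c > 0"
  shows "r powr q1 * r powr q2 + a * r powr q2 + b * r powr q1 + c > 0"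
proof -
  define x where "x = r powr q1"
  define y where "y = r powr q2"
  have xp: "x > 0" "y > 0" using r by (auto simp: x_def y_def)
  show ?thesis
  proof (cases "r \<ge> 1")
    case True
    have x1: "1 \<le> x" unfolding x_def using True q by (simp add: ge_one_powr_ge_zero)
    have xy: "x \<le> y" unfolding x_def y_def using True q by (intro powr_mono) auto
    have "y * (x + a) \<ge> x * (x + a)" using xy x1 abc by (intro mult_right_mono) auto
    moreover have "x * x + (a + b) * x + c > 0" using xp abc
      by (simp add: add_pos_pos)
    ultimately have "x * y + a * y + b * x + c > 0" by (simp add: algebra_simps)
    then show ?thesis by (simp add: x_def y_def)
  next
    case False
    have x1: "x \<le> 1" unfolding x_def using False q r by (intro powr_le1) auto
    have xy: "y \<le> x" unfolding x_def y_def using False q r by (intro powr_mono') auto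
    have "x * y + a * y + b * x + c > 0"
    proof (cases "y + b \<ge> 0")
      case True
      have "x * (y + b) \<ge> y * (y + b)" using True xy by (intro mult_right_mono) auto
      moreover have "y * y + (a + b) * y + c > 0" using xp abc by (simp add: add_pos_pos)
      ultimately show ?thesis by (simp add: algebra_simps)
    next
      case False
      have "x * (y + b) \<ge> 1 * (y + b)" using False x1 by (intro mult_right_mono_neg) auto
      moreover have "(a + 1) * y + (b + c) > 0" using xp abc by (simp add: add_pos_pos)
      ultimately show ?thesis by (simp add: algebra_simps)
    qed
    then show ?thesis by (simp add: x_def y_def)
  qed
qed

lemma arg_half:
  fixes \<theta> :: real
  assumes "cos \<theta> \<ge> 0" "-pi < \<theta>" "\<theta> \<le> pi"
  shows "\<bar>\<theta>\<bar> \<le> pi/2"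
proof (rule ccontr)
  assume "\<not> ?thesis"
  then consider "\<theta> > pi/2" | "-\<theta> > pi/2" by linarith
  then show False
  proof cases
    case 1
    then have "cos \<theta> < cos (pi/2)" using assms by (intro cos_monotone_0_pi) auto
    then show False using assms by simp
  next
    case 2
    then have "cos (-\<theta>) < cos (pi/2)" using assms by (intro cos_monotone_0_pi) auto
    then show False using assms by simp
  qed
qed

theorem proposition2:
  fixes q1 q2 a b c :: real
  assumes "c > 0" and "0 < q1" and "q1 < q2" and "q2 < 1"
  shows "(a + 1 > 0 \<and> a + b > 0 \<and> b + c > 0 \<longrightarrow>
            (\<forall>s::complex. Delta q1 q2 a b c s = 0 \<longrightarrow> Re s < 0))
       \<and> (a + b + c + 1 \<le> 0 \<longrightarrow>
            (\<exists>x::real. x > 0 \<and> Delta q1 q2 a b c (complex_of_real x) = 0))"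
proof (intro conjI impI allI)
  assume H: "a + 1 > 0 \<and> a + b > 0 \<and> b + c > 0"
  fix s :: complex
  assume D: "Delta q1 q2 a b c s = 0"
  show "Re s < 0"
  proof (rule ccontr)
    assume "\<not> Re s < 0"
    then have Res: "Re s \<ge> 0" by simp
    have s0: "s \<noteq> 0"
    proof
      assume "s = 0"
      with D assms show False by (simp add: Delta_def)
    qed
    define r where "r = cmod s"
    define \<theta> where "\<theta> = Arg s"
    have r: "r > 0" using s0 by (simp add: r_def)
    have "cos \<theta> \<ge> 0" using s0 Res by (simp add: \<theta>_def cos_Arg)
    then have thb: "\<bar>\<theta>\<bar> \<le> pi/2" using mpi_less_Arg[of s] Arg_le_pi[of s]
      by (intro arg_half) (auto simp: \<theta>_def)
    define X where "X = q1 + q2"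
    have Dp: "Delta q1 q2 a b c s =
        complex_of_real (r powr X) * cis (X * \<theta>) + complex_of_real a * (complex_of_real (r powr q2) * cis (q2 * \<theta>))
        + complex_of_real b * (complex_of_real (r powr q1) * cis (q1 * \<theta>)) + complex_of_real c"
      unfolding Delta_def X_def r_def \<theta>_def by (simp only: cpowr_polar[OF s0])
    have ReD: "r powr X * cos (X * \<theta>) + a * r powr q2 * cos (q2 * \<theta>) + b * r powr q1 * cos (q1 * \<theta>) + c = 0"
      using arg_cong[OF D, of Re] unfolding Dp by simp
    have ImD: "r powr X * sin (X * \<theta>) + a * r powr q2 * sin (q2 * \<theta>) + b * r powr q1 * sin (q1 * \<theta>) = 0"
      using arg_cong[OF D, of Im] unfolding Dp by simp
    have s1: "sin (q1 * \<theta>) = sin (X * \<theta>) * cos (q2 * \<theta>) - cos (X * \<theta>) * sin (q2 * \<theta>)"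
      using sin_diff[of "X * \<theta>" "q2 * \<theta>"] by (simp add: X_def algebra_simps)
    have s2: "sin (q2 * \<theta>) = sin (X * \<theta>) * cos (q1 * \<theta>) - cos (X * \<theta>) * sin (q1 * \<theta>)"
      using sin_diff[of "X * \<theta>" "q1 * \<theta>"] by (simp add: X_def algebra_simps)
    have E2: "c * sin (X * \<theta>) + a * r powr q2 * sin (q1 * \<theta>) + b * r powr q1 * sin (q2 * \<theta>) = 0"
    proof -
      have "c * sin (X * \<theta>) + a * r powr q2 * sin (q1 * \<theta>) + b * r powr q1 * sin (q2 * \<theta>)
          = (r powr X * cos (X * \<theta>) + a * r powr q2 * cos (q2 * \<theta>) + b * r powr q1 * cos (q1 * \<theta>) + c) * sin (X * \<theta>)
            - (r powr X * sin (X * \<theta>) + a * r powr q2 * sin (q2 * \<theta>) + b * r powr q1 * sin (q1 * \<theta>)) * cos (X * \<theta>)"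
        by (subst s1, subst s2) (simp add: algebra_simps)
      then show ?thesis using ReD ImD by simp
    qed
    have Hs: "a + 1 > 0" "a + b > 0" "b + c > 0" using H by auto
    consider "\<theta> > 0" | "\<theta> < 0" | "\<theta> = 0" by linarith
    then show False
    proof cases
      case 1
      show False
        by (rule core[OF r 1 _ assms(2,3,4) assms(1) Hs]) (use thb 1 ImD E2 in \<open>auto simp: X_def\<close>)
    next
      case 2
      have "-\<theta> > 0" using 2 by simp
      show False
        by (rule core[OF r \<open>-\<theta> > 0\<close> _ assms(2,3,4) assms(1) Hs])
           (use thb 2 ImD E2 in \<open>auto simp: X_def\<close>)
    next
      case 3
      have "r powr q1 * r powr q2 + a * r powr q2 + b * r powr q1 + c > 0"
        using real_case_pos[OF r assms(2,3) assms(1) Hs] .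
      moreover have "r powr X = r powr q1 * r powr q2" using r by (simp add: X_def powr_add)
      ultimately show False using ReD 3 by simp
    qed
  qed
next
  assume H: "a + b + c + 1 \<le> 0"
  define f where "f = (\<lambda>t::real. t powr (q1 + q2) + a * t powr q2 + b * t powr q1 + c)"
  have cont: "continuous_on {0..1} f"
    unfolding f_def using assms
    by (intro continuous_intros continuous_on_powr') auto
  have "f 1 \<le> 0" using H by (simp add: f_def)
  moreover have "0 \<le> f 0" using assms by (simp add: f_def)
  ultimately obtain t where t: "0 \<le> t" "t \<le> 1" "f t = 0"
    using IVT2'[where f=f and a=0 and b=1 and y=0, OF _ _ _ cont] by auto
  have "t \<noteq> 0" using t assms by (auto simp: f_def)
  with t have tp: "t > 0" by simp
  have "Delta q1 q2 a b c (complex_of_real t) = complex_of_real (f t)"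
  proof -
    have P: "\<And>q. complex_of_real t powr complex_of_real q = complex_of_real (t powr q)"
      using tp by (intro powr_of_real) simp
    show ?thesis unfolding Delta_def f_def P by (simp only: of_real_add of_real_mult)
  qed
  then show "\<exists>x::real. x > 0 \<and> Delta q1 q2 a b c (complex_of_real x) = 0"
    using tp t by auto
qed

end
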